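(* Let $p$ be a prime, $V\in\mathbb{F}_p((X^{-1}))$ arbitrary, and $L\in\mathbb{F}_p((X^{-1}))$ irrational with continued fraction $[A_0;A_1,A_2,\ldots]$ and $d_h=\deg Q_h$. Let $m\in\mathbb{N}$ and $H\in\mathbb{N}$ with $d_H\le m<d_{H+1}$. Consider the point set of $p^m$ points in $[0,1)$ obtained from $\{k(X)L(X)+V(X)\}$ evaluated at $X=p$, where $k$ ranges over all polynomials in $\mathbb{F}_p[X]$ of degree $<m$. Then its star discrepancy satisfies $p^mD^*_{p^m}\le p^{\deg(A_{H+1}(L))}$.
   Context: Elements of $\mathbb{F}_p$ are identified with $\{0,\ldots,p-1\}$. For $M=\sum_{i=w}^\infty a_iX^{-i}$, $\{M\}=\sum_{i\ge\max(1,w)}a_iX^{-i}$, and if $\{M\}=\sum_{i\ge1}c_iX^{-i}$, its evaluation at $X=p$ is the real number $\sum_{i\ge1}c_ip^{-i}$. Irrational $L$ has unique continued fraction $[A_0;A_1,\ldots]$, $A_i\in\mathbb{F}_p[X]$, $\deg A_i\ge1$ for $i\ge1$; $A_{h}(L)=A_h$; convergents $P_h/Q_h=[A_0;\ldots,A_h]$ in lowest terms, $d_h=\deg Q_h=\sum_{i=1}^h\deg A_i$. For a point set $z_0,\ldots,z_{M-1}$ in $[0,1)$, $D_M^*=\sup_{0<\gamma\le1}|\#\{i:z_i<\gamma\}/M-\gamma|$. *)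

theory Defs
  imports Complex_Main "HOL-Computational_Algebra.Formal_Laurent_Series"
    "Berlekamp_Zassenhaus.Finite_Field"
begin

(* F_p((X^{-1})) is modelled as Laurent series 'p mod_ring fls in the variable Y = X^{-1}
   (with CARD('p) = p prime).  Thus  fls_nth M i  is the coefficient of X^{-i}. *)
type_synonym 'p lser = "'p mod_ring fls"

(* {M}: keep the coefficients of X^{-i}, i >= 1 *)
definition frac_part :: "'p::prime_card lser \<Rightarrow> 'p lser" where
  "frac_part M = fps_to_fls (fls_regpart M) - fls_const (fls_nth M 0)"

definition poly_part :: "'p::prime_card lser \<Rightarrow> 'p lser" where
  "poly_part M = M - frac_part M"

(* embedding of F_p[X] into F_p((X^{-1})): X^j = Y^{-j} *)
definition poly_lser :: "'p::prime_card mod_ring poly \<Rightarrow> 'p lser" where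
  "poly_lser k = (\<Sum>j\<le>Polynomial.degree k. fls_const (Polynomial.coeff k j) * fls_X_intpow (- int j))"

(* degree in X *)
definition ldeg :: "'p::prime_card lser \<Rightarrow> int" where
  "ldeg M = - fls_subdegree M"

definition irrational_lser :: "'p::prime_card lser \<Rightarrow> bool" where
  "irrational_lser L \<longleftrightarrow> \<not> (\<exists>P Q. Q \<noteq> 0 \<and> poly_lser Q * L = poly_lser P)"

fun cquot :: "'p::prime_card lser \<Rightarrow> nat \<Rightarrow> 'p lser" where
  "cquot L 0 = L"
| "cquot L (Suc n) = inverse (frac_part (cquot L n))"

definition pquot :: "'p::prime_card lser \<Rightarrow> nat \<Rightarrow> 'p lser" where
  "pquot L h = poly_part (cquot L h)"

(* d_h = deg Q_h = sum_{i=1}^h deg A_i *)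
definition cf_d :: "'p::prime_card lser \<Rightarrow> nat \<Rightarrow> int" where
  "cf_d L h = (\<Sum>i\<in>{1..h}. ldeg (pquot L i))"

definition eval_at_p :: "'p::prime_card lser \<Rightarrow> real" where
  "eval_at_p M = (\<Sum>i. real_of_int (to_int_mod_ring (fls_nth (frac_part M) (int (Suc i))))
                        / real CARD('p) ^ Suc i)"

definition star_disc :: "'i set \<Rightarrow> ('i \<Rightarrow> real) \<Rightarrow> real" where
  "star_disc I z = Sup {\<bar>real (card {i\<in>I. z i < \<gamma>}) / real (card I) - \<gamma>\<bar> | \<gamma>. 0 < \<gamma> \<and> \<gamma> \<le> 1}"

end

theory Submission
  imports Defs
begin
unbundle fps_syntax



definition pt :: "'p::prime_card lser \<Rightarrow> bool" where
  "pt M \<longleftrightarrow> (\<forall>n\<ge>1. M $$ n = 0)"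

lemma frac_nth: "frac_part M $$ n = (if 1 \<le> n then M $$ n else 0)"
  by (auto simp: frac_part_def)

lemma poly_part_nth: "poly_part M $$ n = (if n \<le> 0 then M $$ n else 0)"
  by (auto simp: poly_part_def frac_nth)

lemma frac_add: "frac_part (A + B) = frac_part A + frac_part B"
  by (rule fls_eqI) (simp add: frac_nth)
lemma frac_diff: "frac_part (A - B) = frac_part A - frac_part B"
  by (rule fls_eqI) (simp add: frac_nth)
lemma frac_uminus: "frac_part (- A) = - frac_part A"
  by (rule fls_eqI) (simp add: frac_nth)
lemma frac_eq0_iff: "frac_part M = 0 \<longleftrightarrow> pt M"
  unfolding pt_def by (auto simp: fls_eq_iff frac_nth)

lemma pt_poly_part: "pt (poly_part M)"
  by (simp add: pt_def poly_part_nth)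

lemma pt_mult: assumes "pt A" "pt B" shows "pt (A * B)"
  unfolding pt_def
proof (intro allI impI)
  fix n :: int assume n: "n \<ge> 1"
  show "(A * B) $$ n = 0"
    unfolding fls_times_nth(2)
  proof (rule sum.neutral, rule ballI)
    fix i assume "i \<in> {fls_subdegree A..n - fls_subdegree B}"
    show "A $$ i * B $$ (n - i) = 0"
    proof (cases "i \<ge> 1")
      case True then show ?thesis using assms by (simp add: pt_def)
    next
      case False then have "n - i \<ge> 1" using n by simp
      then show ?thesis using assms by (simp add: pt_def)
    qed
  qed
qed

lemma poly_lser_nth: "poly_lser k $$ n = (if n \<le> 0 then Polynomial.coeff k (nat (-n)) else 0)"
proof -
  have "poly_lser k $$ n = (\<Sum>j\<le>Polynomial.degree k. if n = - int j then Polynomial.coeff k j else 0)"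
    unfolding poly_lser_def fls_nth_sum
    by (intro sum.cong refl) (auto simp: fls_mult_const_nth)
  also have "\<dots> = (if n \<le> 0 then Polynomial.coeff k (nat (-n)) else 0)"
  proof (cases "n \<le> 0 \<and> nat (-n) \<le> Polynomial.degree k")
    case True
    then have "(\<Sum>j\<le>Polynomial.degree k. if n = - int j then Polynomial.coeff k j else 0)
       = (\<Sum>j\<le>Polynomial.degree k. if j = nat (-n) then Polynomial.coeff k j else 0)"
      by (intro sum.cong refl) auto
    then show ?thesis using True by simp
  next
    case False
    then show ?thesis by (auto intro!: sum.neutral simp: coeff_eq_0)
  qed
  finally show ?thesis .
qed

lemma frac_id: "(\<And>n. n \<le> 0 \<Longrightarrow> M $$ n = 0) \<Longrightarrow> frac_part M = M"
  by (rule fls_eqI) (auto simp: frac_nth)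

lemma sd_frac_ge1: "frac_part M \<noteq> 0 \<Longrightarrow> 1 \<le> fls_subdegree (frac_part M)"
  by (rule fls_subdegree_geI) (auto simp: frac_nth)

lemma sd_frac_ge: "frac_part M \<noteq> 0 \<Longrightarrow> fls_subdegree M \<le> fls_subdegree (frac_part M)"
  by (rule fls_subdegree_geI) (auto simp: frac_nth)

lemma pt_sd_le0: "pt K \<Longrightarrow> K \<noteq> 0 \<Longrightarrow> fls_subdegree K \<le> 0"
  unfolding pt_def by (metis nth_fls_subdegree_nonzero not_le zless_imp_add1_zle add.left_neutral)

lemma pt_poly_lser: "pt (poly_lser k)"
  by (simp add: pt_def poly_lser_nth)

lemma poly_lser_sd: "k \<noteq> 0 \<Longrightarrow> fls_subdegree (poly_lser k) = - int (Polynomial.degree k)"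
  by (rule fls_subdegree_eqI) (auto simp: poly_lser_nth coeff_eq_0)

lemma poly_lser_nz: "k \<noteq> 0 \<Longrightarrow> poly_lser k \<noteq> 0"
  by (rule fls_nonzeroI[of _ "- int (Polynomial.degree k)"]) (simp add: poly_lser_nth)

lemma poly_lser_add: "poly_lser (a + b) = poly_lser a + poly_lser b"
  by (rule fls_eqI) (simp add: poly_lser_nth)
lemma poly_lser_diff: "poly_lser (a - b) = poly_lser a - poly_lser b"
  by (rule fls_eqI) (simp add: poly_lser_nth)

lemma cquot_shift: "cquot (cquot L 1) i = cquot L (Suc i)"
  by (induction i) auto

lemma pquot_shift: "pquot (cquot L 1) i = pquot L (Suc i)"
  by (simp only: pquot_def cquot_shift)

lemma cf_d_Suc: "cf_d L (Suc H) = ldeg (pquot L 1) + cf_d (cquot L 1) H"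
proof -
  have "{1..Suc H} = insert 1 (Suc ` {1..H})" by auto
  then have "cf_d L (Suc H) = ldeg (pquot L 1) + (\<Sum>i\<in>Suc ` {1..H}. ldeg (pquot L i))"
    unfolding cf_d_def by (simp add: sum.insert)
  also have "(\<Sum>i\<in>Suc ` {1..H}. ldeg (pquot L i)) = (\<Sum>i\<in>{1..H}. ldeg (pquot L (Suc i)))"
    by (subst sum.reindex) auto
  also have "\<dots> = cf_d (cquot L 1) H"
    unfolding cf_d_def pquot_shift ..
  finally show ?thesis .
qed

lemma ldeg_poly_part_nonneg: "0 \<le> ldeg (poly_part M)"
proof (cases "poly_part M = 0")
  case False
  then have "poly_part M $$ fls_subdegree (poly_part M) \<noteq> 0" by simp
  then have "fls_subdegree (poly_part M) \<le> 0" by (auto simp: poly_part_nth split: if_splits)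
  then show ?thesis by (simp add: ldeg_def)
qed (simp add: ldeg_def)

lemma cf_d_nonneg: "0 \<le> cf_d L H"
  unfolding cf_d_def pquot_def by (rule sum_nonneg) (rule ldeg_poly_part_nonneg)

lemma ldeg_pquot1: assumes "frac_part L \<noteq> 0"
  shows "ldeg (pquot L 1) = fls_subdegree (frac_part L)"
proof -
  let ?t = "frac_part L"
  have s: "fls_subdegree (inverse ?t) = - fls_subdegree ?t" by simp
  have g: "1 \<le> fls_subdegree ?t" using sd_frac_ge1[OF assms] .
  have nz: "inverse ?t \<noteq> 0" using assms by simp
  have nn: "inverse ?t $$ (- fls_subdegree ?t) \<noteq> 0" by (metis nth_fls_subdegree_nonzero nz s)
  have "fls_subdegree (poly_part (inverse ?t)) = - fls_subdegree ?t"
    by (rule fls_subdegree_eqI) (use s g nz nn in \<open>auto simp: poly_part_nth\<close>)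
  then show ?thesis by (simp add: pquot_def ldeg_def)
qed

lemma BA:
  "(\<forall>i<H. frac_part (cquot L i) \<noteq> 0) \<Longrightarrow> pt K \<Longrightarrow> K \<noteq> 0 \<Longrightarrow>
   - fls_subdegree K < cf_d L H \<Longrightarrow>
   frac_part (K * L) \<noteq> 0 \<and> fls_subdegree (frac_part (K * L)) \<le> cf_d L H"
proof (induction H arbitrary: L K)
  case 0
  then show ?case using pt_sd_le0[of K] by (simp add: cf_d_def)
next
  case (Suc H)
  define t where "t = frac_part L"
  define L1 where "L1 = inverse t"
  define a where "a = fls_subdegree t"
  define d' where "d' = cf_d L1 H"
  have tnz: "t \<noteq> 0" using Suc.prems(1) t_def by force
  have L1c: "L1 = cquot L 1" by (simp add: L1_def t_def)
  have a1: "1 \<le> a" unfolding a_def t_def using sd_frac_ge1 tnz t_def by blast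
  have dSuc: "cf_d L (Suc H) = a + d'"
    unfolding cf_d_Suc a_def d'_def L1c ldeg_pquot1[OF tnz[unfolded t_def]] t_def ..
  have d'0: "0 \<le> d'" unfolding d'_def by (rule cf_d_nonneg)
  have sdK: "fls_subdegree K \<le> 0" using pt_sd_le0 Suc.prems by blast
  have Ldec: "L = poly_part L + t" by (simp add: poly_part_def t_def)
  have "frac_part (K * L) = frac_part (K * poly_part L) + frac_part (K * t)"
    by (subst Ldec) (simp add: distrib_left frac_add)
  also have "frac_part (K * poly_part L) = 0"
    using frac_eq0_iff pt_mult[OF Suc.prems(2) pt_poly_part] by blast
  finally have fKL: "frac_part (K * L) = frac_part (K * t)" by simp
  have Ktnz: "K * t \<noteq> 0" using tnz Suc.prems(3) by simp
  have sdKt: "fls_subdegree (K * t) = fls_subdegree K + a"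
    using tnz Suc.prems(3) a_def by simp
  show ?case
  proof (cases "1 \<le> fls_subdegree K + a")
    case True
    have "frac_part (K * t) = K * t"
      by (rule frac_id) (use True sdKt in auto)
    then show ?thesis using fKL Ktnz sdKt sdK d'0 dSuc by simp
  next
    case False
    define J where "J = poly_part (K * t)"
    define u where "u = frac_part (K * t)"
    have "J $$ (fls_subdegree K + a) = (K * t) $$ fls_subdegree (K * t)"
      using False sdKt by (simp add: J_def poly_part_nth)
    then have Jn: "J $$ (fls_subdegree K + a) \<noteq> 0" using Ktnz by simp
    then have Jnz: "J \<noteq> 0" by auto
    have sdJ: "fls_subdegree J = fls_subdegree K + a"
      by (rule fls_subdegree_eqI[OF Jn]) (use sdKt in \<open>simp add: J_def poly_part_nth\<close>)
    have IHpre: "\<forall>i<H. frac_part (cquot L1 i) \<noteq> 0"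
    proof (intro allI impI)
      fix i assume "i < H"
      then have "frac_part (cquot L (Suc i)) \<noteq> 0" using Suc.prems(1) by blast
      then show "frac_part (cquot L1 i) \<noteq> 0" unfolding L1c cquot_shift .
    qed
    have "- fls_subdegree J < cf_d L1 H"
      using Suc.prems(4) sdJ dSuc d'_def by simp
    then have IH: "frac_part (J * L1) \<noteq> 0 \<and> fls_subdegree (frac_part (J * L1)) \<le> d'"
      using Suc.IH[OF IHpre pt_poly_part[of "K * t", folded J_def] Jnz] d'_def by blast
    have Kt: "K * t = J + u" by (simp add: J_def u_def poly_part_def)
    have "K = K * t * L1" using tnz by (simp add: L1_def)
    also have "\<dots> = J * L1 + u * L1" by (simp add: Kt distrib_right)
    finally have "frac_part K = frac_part (J * L1) + frac_part (u * L1)"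
      by (metis frac_add)
    moreover have "frac_part K = 0" using Suc.prems(2) frac_eq0_iff by blast
    ultimately have fu: "frac_part (u * L1) = - frac_part (J * L1)"
      by (simp add: add_eq_0_iff)
    then have fnz: "frac_part (u * L1) \<noteq> 0" using IH by simp
    then have unz: "u \<noteq> 0" using frac_eq0_iff[of 0] by (auto simp: pt_def)
    have L1nz: "L1 \<noteq> 0" using tnz L1_def by simp
    have "fls_subdegree (u * L1) = fls_subdegree u - a"
      using unz L1nz by (simp add: L1_def a_def)
    moreover have "fls_subdegree (u * L1) \<le> fls_subdegree (frac_part (u * L1))"
      by (rule sd_frac_ge[OF fnz])
    moreover have "fls_subdegree (frac_part (u * L1)) \<le> d'" using fu IH by simp
    ultimately have "fls_subdegree u \<le> a + d'" by simp
    then show ?thesis using unz fKL u_def dSuc by simp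
  qed
qed



lemma card_fib_less:
  assumes fin: "finite I" and fib: "\<And>b. b < R \<Longrightarrow> card {k\<in>I. a k = b} = N"
  shows "c \<le> R \<Longrightarrow> card {k\<in>I. a k < c} = c * N"
proof (induction c)
  case 0 then show ?case by simp
next
  case (Suc c)
  have "{k\<in>I. a k < Suc c} = {k\<in>I. a k < c} \<union> {k\<in>I. a k = c}" by auto
  moreover have "card ({k\<in>I. a k < c} \<union> {k\<in>I. a k = c}) = card {k\<in>I. a k < c} + card {k\<in>I. a k = c}"
    by (rule card_Un_disjoint) (use fin in auto)
  ultimately show ?case using Suc fib[of c] by simp
qed

lemma count_bound:
  fixes z :: "'i \<Rightarrow> real" and a :: "'i \<Rightarrow> nat"
  assumes fin: "finite I" and R: "R > 0" and N: "N > 0"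
    and aR: "\<And>k. k \<in> I \<Longrightarrow> a k < R"
    and fib: "\<And>b. b < R \<Longrightarrow> card {k\<in>I. a k = b} = N"
    and zl: "\<And>k. k \<in> I \<Longrightarrow> real (a k) / real R \<le> z k"
    and zu: "\<And>k. k \<in> I \<Longrightarrow> z k \<le> (real (a k) + 1) / real R"
  shows "star_disc I z \<le> 1 / real R"
proof -
  have cI: "card I = R * N"
  proof -
    have e: "I = {k\<in>I. a k < R}" using aR by auto
    have "card {k\<in>I. a k < R} = R * N" by (rule card_fib_less[OF fin fib]) auto
    then show ?thesis using e by metis
  qed
  have each: "\<bar>real (card {k\<in>I. z k < \<gamma>}) / real (card I) - \<gamma>\<bar> \<le> 1 / real R"
    if g: "0 < \<gamma>" "\<gamma> \<le> 1" for \<gamma>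
  proof -
    define c where "c = nat \<lceil>\<gamma> * real R\<rceil>"
    have Rp: "real R > 0" using R by simp
    have c1: "real c - 1 < \<gamma> * real R" "\<gamma> * real R \<le> real c"
      unfolding c_def using g Rp by (auto simp: of_nat_nat ceiling_correct)
    have "\<gamma> * real R > 0" using g Rp by simp
    then have "real c > 0" using c1(2) by linarith
    then have cpos: "c \<ge> 1" by simp
    have cR: "c \<le> R"
    proof -
      have "\<gamma> * real R \<le> real R" using g Rp by simp
      then have "real c - 1 < real R" using c1 by simp
      then show ?thesis by linarith
    qed
    let ?C = "card {k\<in>I. z k < \<gamma>}"
    have sub1: "{k\<in>I. a k < c - 1} \<subseteq> {k\<in>I. z k < \<gamma>}"
    proof safe
      fix k assume k: "k \<in> I" "a k < c - 1"
      then have "real (a k) + 1 \<le> real c - 1" using cpos by linarith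
      then have "(real (a k) + 1) / real R < \<gamma>" using c1 Rp by (simp add: divide_less_eq)
      then show "z k < \<gamma>" using zu[OF k(1)] by simp
    qed
    have sub2: "{k\<in>I. z k < \<gamma>} \<subseteq> {k\<in>I. a k < c}"
    proof safe
      fix k assume k: "k \<in> I" "z k < \<gamma>"
      then have "real (a k) / real R < \<gamma>" using zl[OF k(1)] by simp
      then have "real (a k) < \<gamma> * real R" using Rp by (simp add: divide_less_eq)
      then show "a k < c" using c1 by linarith
    qed
    have lo: "(c - 1) * N \<le> ?C"
      using card_mono[OF _ sub1] fin card_fib_less[OF fin fib, of "c - 1"] cR by simp
    have hi: "?C \<le> c * N"
      using card_mono[OF _ sub2] fin card_fib_less[OF fin fib, of c] cR by simp
    have Np: "real N > 0" using N by simp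
    have "real ?C \<le> real (c * N)" using hi by (simp only: of_nat_le_iff)
    then have "real ?C \<le> real c * real N" by simp
    then have u0: "real ?C / (real R * real N) \<le> (real c * real N) / (real R * real N)"
      using Rp Np by (intro divide_right_mono) auto
    have "(real c * real N) / (real R * real N) = real c / real R" using Np by simp
    with u0 have u: "real ?C / (real R * real N) \<le> real c / real R" by simp
    have "real ((c - 1) * N) \<le> real ?C" using lo by (simp only: of_nat_le_iff)
    then have "(real c - 1) * real N \<le> real ?C" using cpos by (simp add: of_nat_diff)
    then have l0: "((real c - 1) * real N) / (real R * real N) \<le> real ?C / (real R * real N)"
      using Rp Np by (intro divide_right_mono) auto
    have "((real c - 1) * real N) / (real R * real N) = (real c - 1) / real R" using Np by simp
    with l0 have l: "(real c - 1) / real R \<le> real ?C / (real R * real N)" by simp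
    have g1: "(real c - 1) / real R < \<gamma>" "\<gamma> \<le> real c / real R"
      using c1 Rp by (simp_all add: divide_less_eq le_divide_eq)
    have "real c / real R - (real c - 1) / real R = 1 / real R" by (simp add: diff_divide_distrib)
    moreover have qe: "real ?C / real (card I) = real ?C / (real R * real N)" by (simp only: cI of_nat_mult)
    ultimately show ?thesis unfolding qe abs_le_iff using u l g1 by linarith
  qed
  show ?thesis unfolding star_disc_def
    by (rule cSup_least) (use each in \<open>auto intro: exI[of _ 1]\<close>)
qed



definition Ir :: "nat \<Rightarrow> 'a::zero poly set" where "Ir n = {k. \<forall>j\<ge>n. Polynomial.coeff k j = 0}"

lemma Ir_bij: "bij_betw (\<lambda>k. restrict (Polynomial.coeff k) {..<n}) (Ir n) (PiE {..<n} (\<lambda>_. UNIV))"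
proof (rule bij_betwI')
  fix x y :: "'a poly" assume xy: "x \<in> Ir n" "y \<in> Ir n"
  show "(restrict (Polynomial.coeff x) {..<n} = restrict (Polynomial.coeff y) {..<n}) = (x = y)"
  proof
    assume e: "restrict (Polynomial.coeff x) {..<n} = restrict (Polynomial.coeff y) {..<n}"
    show "x = y"
    proof (rule poly_eqI)
      fix j show "Polynomial.coeff x j = Polynomial.coeff y j"
      proof (cases "j < n")
        case True then show ?thesis using fun_cong[OF e, of j] by simp
      next
        case False then show ?thesis using xy by (simp add: Ir_def)
      qed
    qed
  qed simp
next
  fix x :: "'a poly" assume "x \<in> Ir n"
  show "restrict (Polynomial.coeff x) {..<n} \<in> PiE {..<n} (\<lambda>_. UNIV)" by simp
next
  fix f assume f: "f \<in> PiE {..<n} (\<lambda>_. (UNIV :: 'a set))"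
  define k where "k = Poly (map f [0..<n])"
  have ck: "Polynomial.coeff k j = (if j < n then f j else 0)" for j
    by (simp add: k_def nth_default_def)
  have "k \<in> Ir n" by (simp add: Ir_def ck)
  moreover have "f = restrict (Polynomial.coeff k) {..<n}"
  proof
    fix j show "f j = restrict (Polynomial.coeff k) {..<n} j"
    proof (cases "j < n")
      case True then show ?thesis by (simp add: ck)
    next
      case False
      then have "f j = undefined" using f by (intro PiE_arb[of f "{..<n}"]) auto
      then show ?thesis using False by simp
    qed
  qed
  ultimately show "\<exists>k\<in>Ir n. f = restrict (Polynomial.coeff k) {..<n}" by blast
qed

lemma Ir_finite: "finite (Ir n :: 'a::{finite,zero} poly set)"
proof -
  have "finite ({..<n} \<rightarrow>\<^sub>E (UNIV :: 'a set))" by (simp add: finite_PiE)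
  then show ?thesis using bij_betw_finite[OF Ir_bij[of n, where 'a = 'a]] by simp
qed

lemma Ir_card: "card (Ir n :: 'a::{finite,zero} poly set) = CARD('a) ^ n"
  using bij_betw_same_card[OF Ir_bij[of n]] by (simp add: card_PiE)

lemma Ir_diff: "a \<in> Ir n \<Longrightarrow> b \<in> Ir n \<Longrightarrow> (a - b :: 'a::comm_ring_1 poly) \<in> Ir n"
  by (simp add: Ir_def)
lemma Ir_add: "a \<in> Ir n \<Longrightarrow> b \<in> Ir n \<Longrightarrow> (a + b :: 'a::comm_ring_1 poly) \<in> Ir n"
  by (simp add: Ir_def)
lemma Ir_mono: "r \<le> m \<Longrightarrow> Ir r \<subseteq> Ir m"
  by (auto simp: Ir_def)

definition lo :: "nat \<Rightarrow> 'a::zero poly \<Rightarrow> 'a poly" where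
  "lo r k = Poly (map (Polynomial.coeff k) [0..<r])"

lemma coeff_lo: "Polynomial.coeff (lo r k) j = (if j < r then Polynomial.coeff k j else 0)"
  by (simp add: lo_def nth_default_def)

lemma lo_Ir: "lo r k \<in> Ir r" by (simp add: Ir_def coeff_lo)

lemma fibers:
  fixes G :: "'a::{finite,comm_ring_1} poly \<Rightarrow> 'b"
  assumes finP: "finite P" and cP: "card P = card (Ir r :: 'a poly set)"
    and GP: "G ` Ir m \<subseteq> P" and rm: "r \<le> m"
    and sep: "\<And>k1 k2. k1 - k2 \<in> Ir r \<Longrightarrow> G k1 = G k2 \<Longrightarrow> k1 = k2"
  shows "\<exists>N>0. \<forall>y\<in>P. card {k\<in>Ir m. G k = y} = N"
proof -
  define hi where "hi k = k - lo r k" for k :: "'a poly"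
  define Hv where "Hv = hi ` Ir m"
  have hiIr: "hi k \<in> Ir m" if "k \<in> Ir m" for k
    unfolding hi_def using that Ir_mono[OF rm] lo_Ir by (blast intro: Ir_diff)
  have chi: "Polynomial.coeff (hi k) j = (if j < r then 0 else Polynomial.coeff k j)" for k j
    by (simp add: hi_def coeff_lo)
  have lo_add: "lo r (l + h) = l" if lh: "l \<in> Ir r" "h \<in> Hv" for l h
  proof (rule poly_eqI)
    fix j
    obtain k where "h = hi k" using lh(2) Hv_def by blast
    then show "Polynomial.coeff (lo r (l + h)) j = Polynomial.coeff l j"
      using lh(1) by (auto simp: coeff_lo chi Ir_def)
  qed
  have surjG: "\<exists>l\<in>Ir r. G (l + h) = y" if h: "h \<in> Hv" and y: "y \<in> P" for h y
  proof -
    have hm: "h \<in> Ir m" using h hiIr Hv_def by blast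
    have lm: "l + h \<in> Ir m" if "l \<in> Ir r" for l using Ir_add Ir_mono[OF rm] that hm by blast
    have inj: "inj_on (\<lambda>l. G (l + h)) (Ir r)"
    proof (rule inj_onI)
      fix l1 l2 assume "l1 \<in> Ir r" "l2 \<in> Ir r" "G (l1 + h) = G (l2 + h)"
      moreover have "(l1 + h) - (l2 + h) = l1 - l2" by simp
      ultimately have "l1 + h = l2 + h" using sep[of "l1 + h" "l2 + h"] Ir_diff by metis
      then show "l1 = l2" by simp
    qed
    have sub: "(\<lambda>l. G (l + h)) ` Ir r \<subseteq> P" using GP lm by blast
    have "card ((\<lambda>l. G (l + h)) ` Ir r) = card P" using card_image[OF inj] cP by simp
    then have "(\<lambda>l. G (l + h)) ` Ir r = P" using card_subset_eq[OF finP sub] by simp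
    then show ?thesis using y by force
  qed
  have bij: "bij_betw hi {k\<in>Ir m. G k = y} Hv" if y: "y \<in> P" for y
  proof (rule bij_betwI')
    fix k1 k2 assume k: "k1 \<in> {k\<in>Ir m. G k = y}" "k2 \<in> {k\<in>Ir m. G k = y}"
    show "(hi k1 = hi k2) = (k1 = k2)"
    proof
      assume "hi k1 = hi k2"
      then have "k1 - k2 = lo r k1 - lo r k2" by (simp add: hi_def algebra_simps)
      then have "k1 - k2 \<in> Ir r" using lo_Ir Ir_diff by metis
      then show "k1 = k2" using sep k by auto
    qed simp
  next
    fix k assume "k \<in> {k\<in>Ir m. G k = y}" then show "hi k \<in> Hv" using Hv_def by blast
  next
    fix h assume h: "h \<in> Hv"
    obtain l where l: "l \<in> Ir r" "G (l + h) = y" using surjG[OF h y] by blast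
    have hm: "h \<in> Ir m" using h hiIr Hv_def by blast
    have "l + h \<in> Ir m" using Ir_add Ir_mono[OF rm] l hm by blast
    moreover have "hi (l + h) = h" using lo_add[OF l(1) h] by (simp add: hi_def)
    ultimately show "\<exists>k\<in>{k\<in>Ir m. G k = y}. h = hi k" using l by force
  qed
  have "finite Hv" using Ir_finite Hv_def by blast
  moreover have "(0 :: 'a poly) \<in> Ir m" by (simp add: Ir_def)
  then have "Hv \<noteq> {}" using Hv_def by blast
  ultimately have "card Hv > 0" by (simp add: card_gt_0_iff)
  then show ?thesis using bij bij_betw_same_card by blast
qed

fun enc :: "nat \<Rightarrow> (nat \<Rightarrow> nat) \<Rightarrow> nat \<Rightarrow> nat" where
  "enc p d 0 = 0"
| "enc p d (Suc r) = p * enc p d r + d r"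

lemma enc_lt: "(\<forall>i<r. d i < p) \<Longrightarrow> enc p d r < p ^ r"
proof (induction r)
  case (Suc r)
  then have "enc p d r + 1 \<le> p ^ r" "d r + 1 \<le> p" by auto
  then have "p * enc p d r + d r + 1 \<le> p * enc p d r + p" by simp
  also have "\<dots> = p * (enc p d r + 1)" by (simp add: algebra_simps)
  also have "\<dots> \<le> p * p ^ r" by (rule mult_le_mono2) fact
  finally show ?case by simp
qed simp

lemma enc_inj: "(\<forall>i<r. d i < p \<and> e i < p) \<Longrightarrow> enc p d r = enc p e r \<Longrightarrow> \<forall>i<r. d i = e i"
proof (induction r)
  case (Suc r)
  have dr: "d r < p" "e r < p" using Suc.prems by auto
  have "(p * enc p d r + d r) mod p = (p * enc p e r + e r) mod p" using Suc.prems by simp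
  then have 1: "d r = e r" using dr by simp
  then have "p * enc p d r = p * enc p e r" using Suc.prems by simp
  then have "enc p d r = enc p e r" using dr by simp
  then have "\<forall>i<r. d i = e i" using Suc by auto
  then show ?case using 1 less_Suc_eq by auto
qed simp

lemma enc_real: "p > 0 \<Longrightarrow> (\<Sum>i<r. real (d i) / real p ^ Suc i) = real (enc p d r) / real p ^ r"
proof (induction r)
  case (Suc r)
  have "(\<Sum>i<Suc r. real (d i) / real p ^ Suc i) = real (enc p d r) / real p ^ r + real (d r) / real p ^ Suc r"
    using Suc by simp
  also have "\<dots> = (real p * real (enc p d r) + real (d r)) / real p ^ Suc r"
    using Suc.prems by (simp add: add_divide_distrib)
  finally show ?case by simp
qed simp

lemma series_bounds:
  fixes x :: "nat \<Rightarrow> real" and p :: real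
  assumes p: "p > 1" and x: "\<And>i. 0 \<le> x i" "\<And>i. x i \<le> p - 1"
  shows "summable (\<lambda>i. x i / p ^ Suc i)"
    "(\<Sum>i<r. x i / p ^ Suc i) \<le> (\<Sum>i. x i / p ^ Suc i)"
    "(\<Sum>i. x i / p ^ Suc i) \<le> (\<Sum>i<r. x i / p ^ Suc i) + 1 / p ^ r"
proof -
  define g where "g i = (p - 1) / p ^ Suc i" for i
  have gs: "g sums 1"
  proof -
    have "(\<lambda>i. (1 / p) ^ i) sums (1 / (1 - 1 / p))" by (rule geometric_sums) (use p in simp)
    then have "(\<lambda>i. (p - 1) / p * (1 / p) ^ i) sums ((p - 1) / p * (1 / (1 - 1 / p)))"
      by (rule sums_mult)
    moreover have "(p - 1) / p * (1 / (1 - 1 / p)) = 1" using p by (simp add: field_simps)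
    moreover have "(\<lambda>i. (p - 1) / p * (1 / p) ^ i) = g"
      by (auto simp: g_def fun_eq_iff power_one_over field_simps)
    ultimately show ?thesis by metis
  qed
  have le: "x i / p ^ Suc i \<le> g i" for i
    unfolding g_def using x p by (simp add: divide_right_mono)
  have nn: "0 \<le> x i / p ^ Suc i" for i using x p by simp
  show sm: "summable (\<lambda>i. x i / p ^ Suc i)"
  proof (rule summable_comparison_test'[of g 0])
    show "summable g" using gs sums_summable by blast
    fix n show "norm (x n / p ^ Suc n) \<le> g n" using le[of n] nn[of n] by (simp only: real_norm_def abs_of_nonneg)
  qed
  have split: "(\<Sum>i. x i / p ^ Suc i) = (\<Sum>i. x (i + r) / p ^ Suc (i + r)) + (\<Sum>i<r. x i / p ^ Suc i)"
    using suminf_split_initial_segment[OF sm, of r] by simp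
  have sm2: "summable (\<lambda>i. x (i + r) / p ^ Suc (i + r))"
    using sm summable_iff_shift[of "\<lambda>i. x i / p ^ Suc i" r] by simp
  have "0 \<le> (\<Sum>i. x (i + r) / p ^ Suc (i + r))" by (rule suminf_nonneg[OF sm2]) (use nn in auto)
  then show "(\<Sum>i<r. x i / p ^ Suc i) \<le> (\<Sum>i. x i / p ^ Suc i)" using split by simp
  have gsm: "summable g" using gs sums_summable by blast
  have gsm2: "summable (\<lambda>i. g (i + r))" using gsm summable_iff_shift[of g r] by simp
  have "(\<Sum>i. x (i + r) / p ^ Suc (i + r)) \<le> (\<Sum>i. g (i + r))"
    by (rule suminf_le) (use le sm2 gsm2 in auto)
  also have "(\<Sum>i. g (i + r)) = 1 / p ^ r"
  proof -
    have "(\<lambda>i. g (i + r)) = (\<lambda>i. (1 / p ^ r) * g i)"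
      by (auto simp: g_def fun_eq_iff power_add field_simps)
    then have "(\<lambda>i. g (i + r)) sums (1 / p ^ r * 1)" using sums_mult[OF gs] by metis
    then show ?thesis using sums_unique by fastforce
  qed
  finally show "(\<Sum>i. x i / p ^ Suc i) \<le> (\<Sum>i<r. x i / p ^ Suc i) + 1 / p ^ r" using split by simp
qed




lemma frac_zero: "frac_part (0 :: 'p::prime_card lser) = 0"
  by (rule fls_eqI) (simp add: frac_nth)

lemma cquot_zero_prop: "cquot L j = 0 \<Longrightarrow> cquot L (j + n) = 0"
  by (induction n) (auto simp: frac_zero)

lemma to_int_range: "0 \<le> to_int_mod_ring (x :: 'a::finite mod_ring) \<and> to_int_mod_ring x < int CARD('a)"
  using range_to_int_mod_ring[where 'a='a] by (metis atLeastLessThan_iff rangeI)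

theorem lemma5:
  fixes L V :: "'p::prime_card lser" and m H :: nat
  assumes "irrational_lser L"
    and "cf_d L H \<le> int m" and "int m < cf_d L (Suc H)"
  shows "real CARD('p) ^ m *
           star_disc {k :: 'p mod_ring poly. \<forall>j\<ge>m. Polynomial.coeff k j = 0}
                     (\<lambda>k. eval_at_p (poly_lser k * L + V))
         \<le> real CARD('p) powr real_of_int (ldeg (pquot L (Suc H)))"
proof -
  define p where "p = CARD('p)"
  have p1: "p > 1" using prime_card[where 'a='p] p_def prime_gt_1_nat by blast
  define A where "A = pquot L (Suc H)"
  have dS: "cf_d L (Suc H) = cf_d L H + ldeg A"
    unfolding cf_d_def A_def by simp
  have A0: "ldeg A > 0" using assms(2,3) dS by simp
  have nzf: "\<forall>i<H. frac_part (cquot L i) \<noteq> 0"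
  proof (intro allI impI notI)
    fix i assume i: "i < H" and f0: "frac_part (cquot L i) = 0"
    have "cquot L (Suc i) = 0" using f0 by (simp add: fls_inverse_zero)
    then have "cquot L (Suc i + (H - i)) = 0" by (rule cquot_zero_prop)
    moreover have "Suc i + (H - i) = Suc H" using i by simp
    ultimately have "A = 0" unfolding A_def pquot_def poly_part_def by (simp add: frac_zero)
    then show False using A0 by (simp add: ldeg_def)
  qed
  define r where "r = nat (cf_d L H)"
  have r: "int r = cf_d L H" unfolding r_def using cf_d_nonneg by simp
  have rm: "r \<le> m" using r assms(2) by simp
  have mr: "int (m - r) < ldeg A" using r rm assms(3) dS by simp
  \<comment> \<open>separation from best approximation\<close>
  have sepBA: "\<exists>n\<in>{1..r}. (poly_lser k * L) $$ int n \<noteq> 0" if k: "k \<in> Ir r" "k \<noteq> 0" for k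
  proof -
    have "Polynomial.coeff k (Polynomial.degree k) \<noteq> 0" using k(2) by simp
    then have "Polynomial.degree k < r" using k(1) unfolding Ir_def by (metis (mono_tags, lifting) mem_Collect_eq not_le)
    then have "- fls_subdegree (poly_lser k) < cf_d L H" using poly_lser_sd[OF k(2)] r by simp
    then have B: "frac_part (poly_lser k * L) \<noteq> 0 \<and> fls_subdegree (frac_part (poly_lser k * L)) \<le> cf_d L H"
      using BA[OF nzf pt_poly_lser poly_lser_nz[OF k(2)]] by blast
    define n where "n = fls_subdegree (frac_part (poly_lser k * L))"
    have n1: "1 \<le> n" using sd_frac_ge1 B n_def by blast
    have "frac_part (poly_lser k * L) $$ n \<noteq> 0" using B n_def by simp
    then have "(poly_lser k * L) $$ n \<noteq> 0" using n1 by (simp add: frac_nth)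
    moreover have "int (nat n) = n" using n1 by simp
    moreover have "nat n \<in> {1..r}" using n1 B n_def r by auto
    ultimately show ?thesis by metis
  qed
  define G where "G k = restrict (\<lambda>i. frac_part (poly_lser k * L + V) $$ int i) {1..r}" for k
  define P where "P = PiE {1..r} (\<lambda>_. UNIV :: 'p mod_ring set)"
  have finP: "finite P" unfolding P_def by (simp add: finite_PiE)
  have cardP: "card P = p ^ r" unfolding P_def by (simp add: card_PiE p_def)
  have cP: "card P = card (Ir r :: 'p mod_ring poly set)" using cardP Ir_card[where 'a="'p mod_ring"] p_def by simp
  have GP: "G k \<in> P" for k unfolding G_def P_def by simp
  have sep: "k1 = k2" if sk: "k1 - k2 \<in> Ir r" "G k1 = G k2" for k1 k2
  proof (rule ccontr)
    assume ne: "k1 \<noteq> k2"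
    then obtain n where n: "n \<in> {1..r}" "(poly_lser (k1 - k2) * L) $$ int n \<noteq> 0"
      using sepBA[OF sk(1)] by auto
    have "G k1 n = G k2 n" using sk(2) by simp
    then have "frac_part (poly_lser k1 * L + V) $$ int n = frac_part (poly_lser k2 * L + V) $$ int n"
      using n(1) by (simp add: G_def)
    then have "(poly_lser k1 * L) $$ int n = (poly_lser k2 * L) $$ int n"
      using n(1) by (simp add: frac_nth)
    then show False using n(2) by (simp add: poly_lser_diff left_diff_distrib)
  qed
  have "\<exists>N>0. \<forall>y\<in>P. card {k\<in>Ir m. G k = y} = N"
  proof (rule fibers[OF finP cP _ rm])
    show "G ` Ir m \<subseteq> P" using GP by blast
  qed (rule sep)
  then obtain N where N: "N > 0" "\<And>y. y \<in> P \<Longrightarrow> card {k\<in>Ir m. G k = y} = N"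
    by blast
  define dg where "dg y i = nat (to_int_mod_ring ((y :: nat \<Rightarrow> 'p mod_ring) (Suc i)))" for y i
  define code where "code y = enc p (dg y) r" for y
  have dglt: "dg y i < p" for y i
    unfolding dg_def p_def using to_int_range[of "y (Suc i)"] by (simp add: nat_less_iff)
  have code_lt: "code y < p ^ r" for y unfolding code_def using dglt enc_lt by blast
  have code_inj: "inj_on code P"
  proof (rule inj_onI)
    fix y1 y2 assume y: "y1 \<in> P" "y2 \<in> P" "code y1 = code y2"
    then have e: "\<forall>i<r. dg y1 i = dg y2 i" unfolding code_def using enc_inj dglt by blast
    show "y1 = y2"
    proof (rule PiE_ext[OF y(1)[unfolded P_def] y(2)[unfolded P_def]])
      fix j assume j: "j \<in> {1..r}"
      then obtain i where i: "j = Suc i" "i < r" by (cases j) auto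
      have "nat (to_int_mod_ring (y1 j)) = nat (to_int_mod_ring (y2 j))"
        using e i unfolding dg_def by simp
      then have "to_int_mod_ring (y1 j) = to_int_mod_ring (y2 j)"
        using to_int_range[of "y1 j"] to_int_range[of "y2 j"] by (simp add: nat_eq_iff2)
      then show "y1 j = y2 j" by (simp add: to_int_mod_ring_hom.injectivity)
    qed
  qed
  have code_img: "code ` P = {..<p ^ r}"
  proof (rule card_subset_eq)
    show "code ` P \<subseteq> {..<p ^ r}" using code_lt by auto
    show "card (code ` P) = card {..<p ^ r}" using card_image[OF code_inj] cardP by simp
  qed simp
  define a where "a k = code (G k)" for k
  have fib: "card {k\<in>Ir m. a k = b} = N" if b: "b < p ^ r" for b
  proof -
    obtain y where y: "y \<in> P" "code y = b" using b code_img by (metis imageE lessThan_iff)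
    have "{k\<in>Ir m. a k = b} = {k\<in>Ir m. G k = y}"
      using y code_inj GP unfolding a_def by (auto dest: inj_onD)
    then show ?thesis using N(2)[OF y(1)] by simp
  qed
  define z where "z k = eval_at_p (poly_lser k * L + V)" for k
  have zb: "real (a k) / real (p ^ r) \<le> z k \<and> z k \<le> (real (a k) + 1) / real (p ^ r)" for k
  proof -
    define M where "M = poly_lser k * L + V"
    define x where "x i = real_of_int (to_int_mod_ring (frac_part M $$ int (Suc i)))" for i
    have x0: "0 \<le> x i" for i unfolding x_def using to_int_range[of "frac_part M $$ int (Suc i)"] by simp
    have x1: "x i \<le> real p - 1" for i
    proof -
      have "to_int_mod_ring (frac_part M $$ int (Suc i)) < int p"
        using to_int_range[of "frac_part M $$ int (Suc i)"] p_def by blast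
      then show ?thesis unfolding x_def by linarith
    qed
    have rp1: "real p > 1" using p1 by simp
    have zx: "z k = (\<Sum>i. x i / real p ^ Suc i)"
      unfolding z_def eval_at_p_def x_def M_def p_def ..
    have pre: "(\<Sum>i<r. x i / real p ^ Suc i) = real (a k) / real p ^ r"
    proof -
      have "(\<Sum>i<r. x i / real p ^ Suc i) = (\<Sum>i<r. real (dg (G k) i) / real p ^ Suc i)"
      proof (rule sum.cong[OF refl])
        fix i assume "i \<in> {..<r}"
        then have "G k (Suc i) = frac_part M $$ int (Suc i)" by (simp add: G_def M_def)
        then show "x i / real p ^ Suc i = real (dg (G k) i) / real p ^ Suc i"
          unfolding x_def dg_def using to_int_range[of "G k (Suc i)"] by simp
      qed
      also have "\<dots> = real (a k) / real p ^ r"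
        unfolding a_def code_def using enc_real p1 by simp
      finally show ?thesis .
    qed
    have s1: "(\<Sum>i<r. x i / real p ^ Suc i) \<le> (\<Sum>i. x i / real p ^ Suc i)"
      by (rule series_bounds(2)[OF rp1 x0 x1])
    have s2: "(\<Sum>i. x i / real p ^ Suc i) \<le> (\<Sum>i<r. x i / real p ^ Suc i) + 1 / real p ^ r"
      by (rule series_bounds(3)[OF rp1 x0 x1])
    have "(real (a k) + 1) / real p ^ r = real (a k) / real p ^ r + 1 / real p ^ r"
      by (simp add: add_divide_distrib)
    then show ?thesis using s1 s2 pre zx by (simp add: of_nat_power)
  qed
  have pr: "p ^ r > 0" using p1 by simp
  have SD: "star_disc (Ir m) z \<le> 1 / real (p ^ r)"
    by (rule count_bound[OF Ir_finite pr N(1) _ fib])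
       (use zb code_lt a_def in auto)
  have SD': "star_disc {k :: 'p mod_ring poly. \<forall>j\<ge>m. Polynomial.coeff k j = 0}
                     (\<lambda>k. eval_at_p (poly_lser k * L + V)) \<le> 1 / real p ^ r"
    using SD unfolding Ir_def z_def by simp
  have "real p ^ m * star_disc {k :: 'p mod_ring poly. \<forall>j\<ge>m. Polynomial.coeff k j = 0}
                     (\<lambda>k. eval_at_p (poly_lser k * L + V)) \<le> real p ^ m * (1 / real p ^ r)"
    by (rule mult_left_mono[OF SD']) simp
  also have "\<dots> = real p ^ (m - r)"
    using rm p1 by (simp add: power_diff)
  also have "\<dots> \<le> real p ^ nat (ldeg A)"
    using mr p1 by (intro power_increasing) auto
  also have "\<dots> = real p powr real_of_int (ldeg A)"
  proof -
    have "real p powr real_of_int (ldeg A) = real p powr real (nat (ldeg A))" using A0 by simp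
    also have "\<dots> = real p ^ nat (ldeg A)" by (rule powr_realpow) (use p1 in simp)
    finally show ?thesis by simp
  qed
  finally show ?thesis unfolding A_def p_def .
qed


end
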